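(* Let a product two-action game with $m$ players, with data $\underline v$ and $a^i_j$ as in the context, be given. For $\pi\in S_m$ put $$EC(\pi):=\{\underline\gamma\in[0,1]^m \mid L(\underline\gamma)=F(\pi),\ \gamma^j=a^{\pi(j)}_j \text{ for all } j\in\mathcal A\setminus F(\pi)\}.$$ Then the set of equilibrium candidates of the game equals $\bigcup_{\pi\in S_m}EC(\pi)$, and this union is disjoint. Moreover $|EC(\pi)|=2^{|F(\pi)|}$ for every $\pi\in S_m$, and the total number of equilibrium candidates is $$\sum_{l=0}^m\binom{m}{l}2^l\cdot !(m-l)=V(m).$$
   Context: Fix an integer $m\ge 1$ and $\mathcal A=\{1,\dots,m\}$. A two-action game is a finite game in normal form with player set $\mathcal A$ in which each player $i$ has exactly two pure strategies $s^i_0,s^i_1$, together with utility functions $U^i:S\to\mathbb R$, where $S=\prod_{i\in\mathcal A}\{s^i_0,s^i_1\}$. A mixed strategy combination is identified with $\underline\gamma=(\gamma^1,\dots,\gamma^m)\in[0,1]^m$, where $\gamma^i$ is the probability with which player $i$ plays $s^i_1$. The expected utility $V^i$ is the multilinear extension $V^i(\underline\gamma)=\sum_{(j_1,\dots,j_m)\in\{0,1\}^m}\prod_{k=1}^m p_k(j_k)\,U^i(s^1_{j_1},\dots,s^m_{j_m})$ with $p_k(1)=\gamma^k$, $p_k(0)=1-\gamma^k$. Write $\underline\gamma^{-i}=(\gamma^j)_{j\ne i}$ and $\lambda^i(\underline\gamma^{-i}):=V^i(\underline\gamma)|_{\gamma^i=1}-V^i(\underline\gamma)|_{\gamma^i=0}$,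 a polynomial in $\underline\gamma^{-i}$. A Nash equilibrium is a point $\underline\gamma\in[0,1]^m$ such that for every $i$: $\lambda^i(\underline\gamma^{-i})=0$ if $0<\gamma^i<1$; $\lambda^i(\underline\gamma^{-i})\le 0$ if $\gamma^i=0$; $\lambda^i(\underline\gamma^{-i})\ge 0$ if $\gamma^i=1$. An equilibrium candidate is a point $\underline\gamma\in[0,1]^m$ with $\lambda^i(\underline\gamma^{-i})=0$ for every $i$ with $0<\gamma^i<1$. For $\underline\gamma$ put $L_0(\underline\gamma)=\{i:\gamma^i=0\}$, $L_1(\underline\gamma)=\{i:\gamma^i=1\}$, $L(\underline\gamma)=L_0(\underline\gamma)\cup L_1(\underline\gamma)$. A two-action game is a product two-action game if there exist $\underline v=(v_1,\dots,v_m)\in\{0,1\}^m$ and numbers $a^i_j\in(0,1)$ for $i,j\in\mathcal A$, $i\ne j$, with $a^{i_1}_j\neq a^{i_2}_j$ whenever $i_1\neq i_2$ and both differ from $j$, such that $\lambda^i(\underline\gamma^{-i})=(-1)^{v_i}\prod_{j\in\mathcal A\setminus\{i\}}(\gamma^j-a^i_j)$ for every $i\in\mathcal A$. For $\pi\in S_m$, $F(\pi)=\{i\in\mathcal A:\pi(i)=i\}$ is its set of fixed points. $\mathrm{Der}_m$ denotes the set of derangements (permutations without fixed points) in $S_m$, and the subfactorial $!n$ is the number of derangements of an $n$-element set ($!0=1$, $!1=0$). $V(m):=\sum_{l=0}^m\binom{m}{l}2^l\cdot!(m-l)$. *)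

theory Defs
  imports Complex_Main "HOL-Library.FuncSet" "HOL-Combinatorics.Combinatorics"
begin

text \<open>Pure strategy of player k: False = s_0, True = s_1.
  A mixed strategy combination is gamma :: nat \<Rightarrow> real, gamma k = prob. of s_1.\<close>

definition players :: "nat \<Rightarrow> nat set" where
  "players m = {1..m}"

definition pure_profiles :: "nat \<Rightarrow> (nat \<Rightarrow> bool) set" where
  "pure_profiles m = PiE (players m) (\<lambda>_. UNIV)"

definition mixed_profiles :: "nat \<Rightarrow> (nat \<Rightarrow> real) set" where
  "mixed_profiles m = PiE (players m) (\<lambda>_. {0..1})"

definition prob_of :: "real \<Rightarrow> bool \<Rightarrow> real" where
  "prob_of g b = (if b then g else 1 - g)"

definition exp_util :: "nat \<Rightarrow> (nat \<Rightarrow> (nat \<Rightarrow> bool) \<Rightarrow> real) \<Rightarrow> nat \<Rightarrow> (nat \<Rightarrow> real) \<Rightarrow> real" where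
  "exp_util m U i gamma =
     (\<Sum>s\<in>pure_profiles m. (\<Prod>k\<in>players m. prob_of (gamma k) (s k)) * U i s)"

definition lam :: "nat \<Rightarrow> (nat \<Rightarrow> (nat \<Rightarrow> bool) \<Rightarrow> real) \<Rightarrow> nat \<Rightarrow> (nat \<Rightarrow> real) \<Rightarrow> real" where
  "lam m U i gamma = exp_util m U i (gamma(i := 1)) - exp_util m U i (gamma(i := 0))"

definition product_game ::
  "nat \<Rightarrow> (nat \<Rightarrow> (nat \<Rightarrow> bool) \<Rightarrow> real) \<Rightarrow> (nat \<Rightarrow> nat) \<Rightarrow> (nat \<Rightarrow> nat \<Rightarrow> real) \<Rightarrow> bool" where
  "product_game m U v a \<longleftrightarrow>
     (\<forall>i\<in>players m. v i \<in> {0, 1}) \<and>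
     (\<forall>i\<in>players m. \<forall>j\<in>players m. i \<noteq> j \<longrightarrow> 0 < a i j \<and> a i j < 1) \<and>
     (\<forall>j\<in>players m. \<forall>i1\<in>players m. \<forall>i2\<in>players m.
        i1 \<noteq> i2 \<and> i1 \<noteq> j \<and> i2 \<noteq> j \<longrightarrow> a i1 j \<noteq> a i2 j) \<and>
     (\<forall>i\<in>players m. \<forall>gamma :: nat \<Rightarrow> real.
        lam m U i gamma = (-1) ^ (v i) * (\<Prod>j\<in>players m - {i}. (gamma j - a i j)))"

definition equilibrium_candidates :: "nat \<Rightarrow> (nat \<Rightarrow> (nat \<Rightarrow> bool) \<Rightarrow> real) \<Rightarrow> (nat \<Rightarrow> real) set" where
  "equilibrium_candidates m U =
     {gamma \<in> mixed_profiles m. \<forall>i\<in>players m. 0 < gamma i \<and> gamma i < 1 \<longrightarrow> lam m U i gamma = 0}"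

definition Lset :: "nat \<Rightarrow> (nat \<Rightarrow> real) \<Rightarrow> nat set" where
  "Lset m gamma = {i\<in>players m. gamma i = 0 \<or> gamma i = 1}"

definition fixpts :: "nat \<Rightarrow> (nat \<Rightarrow> nat) \<Rightarrow> nat set" where
  "fixpts m p = {i\<in>players m. p i = i}"

definition EC :: "nat \<Rightarrow> (nat \<Rightarrow> nat \<Rightarrow> real) \<Rightarrow> (nat \<Rightarrow> nat) \<Rightarrow> (nat \<Rightarrow> real) set" where
  "EC m a p = {gamma \<in> mixed_profiles m. Lset m gamma = fixpts m p \<and>
                 (\<forall>j\<in>players m - fixpts m p. gamma j = a (p j) j)}"

definition subfact :: "nat \<Rightarrow> nat" where
  "subfact n = card {p. p permutes {1..n} \<and> (\<forall>x\<in>{1..n}. p x \<noteq> x)}"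

definition Vnum :: "nat \<Rightarrow> nat" where
  "Vnum m = (\<Sum>l=0..m. (m choose l) * 2 ^ l * subfact (m - l))"

end

theory Submission
  imports Defs
begin

definition der :: "'a set \<Rightarrow> ('a \<Rightarrow> 'a) set" where
  "der T = {p. p permutes T \<and> (\<forall>x\<in>T. p x \<noteq> x)}"

lemma card_der: assumes "finite T" shows "card (der T) = subfact (card T)"
proof -
  obtain h where h: "bij_betw h {1..card T} T"
    using finite_same_card_bij[of "{1..card T}" T] assms by auto
  have "card (der {1..card T}) = card (der T)"
    using bij_betw_same_card[OF bij_betw_derangements[OF h]] unfolding der_def .
  thus ?thesis unfolding subfact_def der_def by simp
qed

lemma fix_set_eq:
  assumes "F \<subseteq> S"
  shows "{p. p permutes S \<and> {i\<in>S. p i = i} = F} = der (S - F)"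
proof (safe)
  fix p assume p: "p permutes S" and F: "F = {i\<in>S. p i = i}"
  have "p permutes (S - F)"
  proof (rule bij_imp_permutes)
    show "bij_betw p (S - F) (S - F)"
    proof -
      have b: "bij_betw p S S" using p permutes_imp_bij by blast
      have "p ` F = F" using F by force
      have FS: "F \<subseteq> S" using F by auto
      hence "p ` (S - F) = p ` S - p ` F"
        using b by (intro inj_on_image_set_diff) (auto simp: bij_betw_def)
      hence "p ` (S - F) = S - F" using b \<open>p ` F = F\<close> by (simp add: bij_betw_def)
      thus ?thesis using b bij_betw_subset by (metis Diff_subset bij_betw_def inj_on_subset)
    qed
    show "\<And>x. x \<notin> S - F \<Longrightarrow> p x = x" using p F by (auto simp: permutes_not_in)
  qed
  thus "p \<in> der (S - {i \<in> S. p i = i})" using F by (auto simp: der_def)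
next
  fix p assume "p \<in> der (S - F)"
  hence p: "p permutes (S - F)" "\<forall>x\<in>S-F. p x \<noteq> x" by (auto simp: der_def)
  show "p permutes S" using p(1) permutes_subset by blast
  show "\<And>x. x \<in> S \<Longrightarrow> p x = x \<Longrightarrow> x \<in> F" using p by blast
  show "\<And>x. x \<in> F \<Longrightarrow> x \<in> S" using assms by blast
  show "\<And>x. x \<in> F \<Longrightarrow> p x = x" using p(1) by (simp add: permutes_not_in)
qed

lemma count_perm:
  "(\<Sum>p\<in>{p. p permutes players m}. (2::nat) ^ card (fixpts m p))
     = (\<Sum>l=0..m. (m choose l) * 2 ^ l * subfact (m - l))"
proof -
  let ?S = "players m"
  let ?Perm = "{p. p permutes ?S}"
  have fS: "finite ?S" and cS: "card ?S = m" by (auto simp: players_def)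
  have fP: "finite ?Perm" using fS finite_permutations by blast
  have fx: "\<And>p. fixpts m p \<in> Pow ?S" by (auto simp: fixpts_def)
  have "(\<Sum>p\<in>?Perm. (2::nat) ^ card (fixpts m p))
      = (\<Sum>F\<in>Pow ?S. \<Sum>p\<in>{p\<in>?Perm. fixpts m p = F}. 2 ^ card (fixpts m p))"
    by (rule sum.group[symmetric]) (use fP fS fx in auto)
  also have "\<dots> = (\<Sum>F\<in>Pow ?S. subfact (card ?S - card F) * 2 ^ card F)"
  proof (rule sum.cong[OF refl])
    fix F assume F: "F \<in> Pow ?S"
    have e: "{p\<in>?Perm. fixpts m p = F} = der (?S - F)"
      using fix_set_eq[of F ?S] F by (simp add: fixpts_def)
    have "(\<Sum>p\<in>{p\<in>?Perm. fixpts m p = F}. (2::nat) ^ card (fixpts m p))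
       = (\<Sum>p\<in>{p\<in>?Perm. fixpts m p = F}. 2 ^ card F)" by (rule sum.cong) auto
    also have "\<dots> = card (der (?S - F)) * 2 ^ card F" using e by simp
    also have "\<dots> = subfact (card ?S - card F) * 2 ^ card F"
      using card_der[of "?S - F"] fS F by (simp add: card_Diff_subset finite_subset)
    finally show "(\<Sum>p\<in>{p\<in>?Perm. fixpts m p = F}. (2::nat) ^ card (fixpts m p))
       = subfact (card ?S - card F) * 2 ^ card F" .
  qed
  also have "\<dots> = (\<Sum>l\<in>{0..m}. \<Sum>F\<in>{F\<in>Pow ?S. card F = l}. subfact (card ?S - card F) * 2 ^ card F)"
    by (rule sum.group[symmetric]) (use fS cS in \<open>auto dest: card_mono[OF fS]\<close>)
  also have "\<dots> = (\<Sum>l=0..m. (m choose l) * 2 ^ l * subfact (m - l))"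
  proof (rule sum.cong[OF refl])
    fix l assume "l \<in> {0..m}"
    have "(\<Sum>F\<in>{F\<in>Pow ?S. card F = l}. subfact (card ?S - card F) * 2 ^ card F)
        = (\<Sum>F\<in>{F\<in>Pow ?S. card F = l}. subfact (m - l) * 2 ^ l)"
      by (rule sum.cong) (auto simp: cS)
    also have "\<dots> = card {F. F \<subseteq> ?S \<and> card F = l} * (subfact (m - l) * 2 ^ l)"
      by (simp add: Pow_def)
    also have "\<dots> = (m choose l) * 2 ^ l * subfact (m - l)"
      using n_subsets[OF fS, of l] cS by simp
    finally show "(\<Sum>F\<in>{F\<in>Pow ?S. card F = l}. subfact (card ?S - card F) * 2 ^ card F)
        = (m choose l) * 2 ^ l * subfact (m - l)" .
  qed
  finally show ?thesis .
qed

definition candC :: "nat \<Rightarrow> (nat \<Rightarrow> nat \<Rightarrow> real) \<Rightarrow> (nat \<Rightarrow> real) set" where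
  "candC m a = {g \<in> mixed_profiles m. \<forall>i\<in>players m. 0 < g i \<and> g i < 1 \<longrightarrow>
      (\<exists>j\<in>players m - {i}. g j = a i j)}"

lemma cand_eq:
  assumes "product_game m U v a"
  shows "equilibrium_candidates m U = candC m a"
proof -
  have l: "lam m U i g = 0 \<longleftrightarrow> (\<exists>j\<in>players m - {i}. g j = a i j)" if "i \<in> players m" for i g
  proof -
    have "lam m U i g = (-1) ^ (v i) * (\<Prod>j\<in>players m - {i}. (g j - a i j))"
      using assms that unfolding product_game_def by blast
    moreover have "finite (players m - {i})" by (simp add: players_def)
    ultimately show ?thesis by simp
  qed
  show ?thesis unfolding equilibrium_candidates_def candC_def using l by auto
qed

lemma EC_sub:
  assumes pg: "product_game m U v a" and p: "p permutes players m"
  shows "EC m a p \<subseteq> candC m a"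
proof
  fix g assume g: "g \<in> EC m a p"
  have gg: "g \<in> mixed_profiles m \<and> Lset m g = fixpts m p \<and>
    (\<forall>j\<in>players m - fixpts m p. g j = a (p j) j)" using g unfolding EC_def by (rule CollectD)
  have gm: "g \<in> mixed_profiles m" using gg by (rule conjunct1)
  have L: "Lset m g = fixpts m p" using gg by (elim conjE)
  have A: "\<forall>j\<in>players m - fixpts m p. g j = a (p j) j" using gg by (elim conjE)
  show "g \<in> candC m a" unfolding candC_def
  proof (rule CollectI, rule conjI[OF gm], intro ballI impI)
    fix i assume i: "i \<in> players m" and gi: "0 < g i \<and> g i < 1"
    hence "i \<notin> Lset m g" unfolding Lset_def by simp
    hence pi: "p i \<noteq> i" using L i unfolding fixpts_def by blast
    define j where "j = inv p i"
    have pj: "p j = i" unfolding j_def using permutes_inverses(1)[OF p] .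
    have jP: "j \<in> players m" unfolding j_def
      using permutes_in_image[OF Permutations.permutes_inv[OF p]] i by simp
    have ji: "j \<noteq> i" using pj pi by auto
    have "j \<notin> fixpts m p" using pj ji unfolding fixpts_def by simp
    hence "g j = a i j" using A jP pj by simp
    thus "\<exists>j\<in>players m - {i}. g j = a i j" using jP ji by blast
  qed
qed

lemma mixed_range: "g \<in> mixed_profiles m \<Longrightarrow> i \<in> players m \<Longrightarrow> 0 \<le> g i \<and> g i \<le> 1"
  by (auto simp: mixed_profiles_def PiE_def Pi_def)

lemma mixed_out: "g \<in> mixed_profiles m \<Longrightarrow> i \<notin> players m \<Longrightarrow> g i = undefined"
  by (auto simp: mixed_profiles_def PiE_def extensional_def)

lemma C_sub:
  assumes pg: "product_game m U v a" and g: "g \<in> candC m a"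
  shows "\<exists>p. p permutes players m \<and> g \<in> EC m a p"
proof -
  let ?P = "players m"
  have fP: "finite ?P" by (simp add: players_def)
  have va: "\<And>i j. i \<in> ?P \<Longrightarrow> j \<in> ?P \<Longrightarrow> i \<noteq> j \<Longrightarrow> 0 < a i j \<and> a i j < 1"
    using pg unfolding product_game_def by blast
  have dist: "\<And>i1 i2 j. j \<in> ?P \<Longrightarrow> i1 \<in> ?P \<Longrightarrow> i2 \<in> ?P \<Longrightarrow> i1 \<noteq> i2 \<Longrightarrow> i1 \<noteq> j \<Longrightarrow> i2 \<noteq> j
      \<Longrightarrow> a i1 j \<noteq> a i2 j"
    using pg unfolding product_game_def by blast
  have gm: "g \<in> mixed_profiles m" and gC: "\<forall>i\<in>?P. 0 < g i \<and> g i < 1 \<longrightarrow> (\<exists>j\<in>?P - {i}. g j = a i j)"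
    using g by (auto simp: candC_def)
  define N where "N = {i\<in>?P. 0 < g i \<and> g i < 1}"
  have NL: "N = ?P - Lset m g" unfolding N_def Lset_def using mixed_range[OF gm] by force
  define c where "c i = (SOME j. j \<in> ?P - {i} \<and> g j = a i j)" for i
  have c: "c i \<in> ?P \<and> c i \<noteq> i \<and> g (c i) = a i (c i)" if "i \<in> N" for i
  proof -
    have "\<exists>j. j \<in> ?P - {i} \<and> g j = a i j" using gC that unfolding N_def by blast
    from someI_ex[OF this] show ?thesis unfolding c_def by blast
  qed
  have cN: "c ` N \<subseteq> N"
  proof
    fix x assume "x \<in> c ` N"
    then obtain i where i: "i \<in> N" "x = c i" by blast
    have "i \<in> ?P" using i N_def by auto
    thus "x \<in> N" using c[OF i(1)] va[of i "c i"] i unfolding N_def by auto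
  qed
  have ci: "inj_on c N"
  proof (rule inj_onI)
    fix i1 i2 assume i: "i1 \<in> N" "i2 \<in> N" "c i1 = c i2"
    show "i1 = i2"
    proof (rule ccontr)
      assume "i1 \<noteq> i2"
      moreover have "a i1 (c i1) = a i2 (c i1)" using c[OF i(1)] c[OF i(2)] i(3) by auto
      ultimately show False using dist[of "c i1" i1 i2] c[OF i(1)] c[OF i(2)] i N_def by auto
    qed
  qed
  have fN: "finite N" using fP N_def by auto
  have cb: "bij_betw c N N" using endo_inj_surj[OF fN cN ci] ci by (simp add: bij_betw_def)
  define q where "q = inv_into N c"
  have qb: "bij_betw q N N" unfolding q_def by (rule bij_betw_inv_into[OF cb])
  have cq: "\<And>x. x \<in> N \<Longrightarrow> c (q x) = x" unfolding q_def using cb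
    by (simp add: bij_betw_inv_into_right)
  define p where "p x = (if x \<in> N then q x else x)" for x
  have pb: "bij_betw p N N" using qb by (rule bij_betw_cong[THEN iffD1, rotated]) (simp add: p_def)
  have pN: "p permutes N" by (rule bij_imp_permutes[OF pb]) (simp add: p_def)
  have pP: "p permutes ?P" using permutes_subset[OF pN] N_def by auto
  have qN: "\<And>x. x \<in> N \<Longrightarrow> q x \<in> N" using qb bij_betwE by blast
  have fixq: "\<And>x. x \<in> N \<Longrightarrow> q x \<noteq> x" using c qN cq by metis
  have fx: "fixpts m p = Lset m g"
    using fixq unfolding fixpts_def NL p_def Lset_def by auto
  have eq: "\<forall>j\<in>?P - fixpts m p. g j = a (p j) j"
  proof
    fix j assume "j \<in> ?P - fixpts m p"
    hence j: "j \<in> N" using fx NL by auto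
    have "g (c (q j)) = a (q j) (c (q j))" using c[OF qN[OF j]] by blast
    thus "g j = a (p j) j" using cq[OF j] j p_def by simp
  qed
  show ?thesis using pP gm fx eq by (auto simp: EC_def)
qed

lemma EC_disj:
  assumes pg: "product_game m U v a" and p: "p permutes players m" and q: "q permutes players m"
    and g: "g \<in> EC m a p" "g \<in> EC m a q"
  shows "p = q"
proof
  fix x
  let ?P = "players m"
  have dist: "\<And>i1 i2 j. j \<in> ?P \<Longrightarrow> i1 \<in> ?P \<Longrightarrow> i2 \<in> ?P \<Longrightarrow> i1 \<noteq> i2 \<Longrightarrow> i1 \<noteq> j \<Longrightarrow> i2 \<noteq> j
      \<Longrightarrow> a i1 j \<noteq> a i2 j"
    using pg unfolding product_game_def by blast
  have F: "fixpts m p = fixpts m q" using g by (auto simp: EC_def)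
  show "p x = q x"
  proof (cases "x \<in> ?P")
    case False thus ?thesis using p q by (simp add: permutes_not_in)
  next
    case True
    show ?thesis
    proof (cases "x \<in> fixpts m p")
      case True
      hence "x \<in> fixpts m q" using F by simp
      hence "q x = x" unfolding fixpts_def by simp
      moreover have "p x = x" using True unfolding fixpts_def by simp
      ultimately show ?thesis by simp
    next
      case nf: False
      hence nq: "x \<notin> fixpts m q" using F by simp
      have Ap: "\<forall>j\<in>?P - fixpts m p. g j = a (p j) j" using g(1) unfolding EC_def by simp
      have Aq: "\<forall>j\<in>?P - fixpts m q. g j = a (q j) j" using g(2) unfolding EC_def by simp
      have "a (p x) x = a (q x) x" using bspec[OF Ap, of x] bspec[OF Aq, of x] True nf nq by simp
      moreover have "p x \<noteq> x" using nf True unfolding fixpts_def by simp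
      moreover have "q x \<noteq> x" using nq True unfolding fixpts_def by simp
      moreover have "p x \<in> ?P" using permutes_in_image[OF p] True by simp
      moreover have "q x \<in> ?P" using permutes_in_image[OF q] True by simp
      ultimately show ?thesis using dist[of x "p x" "q x"] True by auto
    qed
  qed
qed

lemma card_EC:
  assumes pg: "product_game m U v a" and p: "p permutes players m"
  shows "card (EC m a p) = 2 ^ card (fixpts m p)"
proof -
  let ?P = "players m" and ?F = "fixpts m p"
  have va: "\<And>i j. i \<in> ?P \<Longrightarrow> j \<in> ?P \<Longrightarrow> i \<noteq> j \<Longrightarrow> 0 < a i j \<and> a i j < 1"
    using pg unfolding product_game_def by blast
  have FP: "?F \<subseteq> ?P" by (auto simp: fixpts_def)
  have fF: "finite ?F" using FP by (rule finite_subset) (simp add: players_def)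
  define h where "h f x = (if x \<in> ?F then f x else if x \<in> ?P then a (p x) x else undefined)"
    for f :: "nat \<Rightarrow> real" and x
  have pnf: "x \<in> ?P - ?F \<Longrightarrow> 0 < a (p x) x \<and> a (p x) x < 1" for x
    using va[of "p x" x] permutes_in_image[OF p] by (auto simp: fixpts_def)
  have "bij_betw (\<lambda>g. restrict g ?F) (EC m a p) (PiE ?F (\<lambda>_. {0, 1::real}))"
  proof (rule bij_betw_byWitness[where f' = h])
    show "\<forall>g\<in>EC m a p. h (restrict g ?F) = g"
    proof
      fix g assume g: "g \<in> EC m a p"
      show "h (restrict g ?F) = g"
      proof
        fix x show "h (restrict g ?F) x = g x"
          using g mixed_out[of g m x] by (auto simp: h_def EC_def)
      qed
    qed
    show "\<forall>f\<in>PiE ?F (\<lambda>_. {0, 1::real}). restrict (h f) ?F = f"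
      by (auto simp: h_def PiE_def extensional_def restrict_def fun_eq_iff)
    show "(\<lambda>g. restrict g ?F) ` EC m a p \<subseteq> PiE ?F (\<lambda>_. {0, 1::real})"
      by (auto simp: EC_def Lset_def)
    show "h ` PiE ?F (\<lambda>_. {0, 1::real}) \<subseteq> EC m a p"
    proof
      fix y assume "y \<in> h ` PiE ?F (\<lambda>_. {0, 1::real})"
      then obtain f where f: "f \<in> PiE ?F (\<lambda>_. {0, 1::real})" and y: "y = h f" by blast
      have fv: "\<And>x. x \<in> ?F \<Longrightarrow> f x = 0 \<or> f x = 1" using f by (auto simp: PiE_def Pi_def)
      have m: "y \<in> mixed_profiles m"
        unfolding mixed_profiles_def PiE_def Pi_def extensional_def
        using f FP pnf fv by (fastforce simp: y h_def less_imp_le)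
      have L: "Lset m y = ?F"
        unfolding Lset_def using f FP pnf by (fastforce simp: y h_def)
      show "y \<in> EC m a p" unfolding EC_def using m L by (auto simp: y h_def)
    qed
  qed
  hence "card (EC m a p) = card (PiE ?F (\<lambda>_. {0, 1::real}))" by (rule bij_betw_same_card)
  also have "\<dots> = 2 ^ card ?F" using fF by (simp add: card_PiE numeral_2_eq_2)
  finally show ?thesis .
qed

theorem theorem3p7:
  fixes m :: nat and U :: "nat \<Rightarrow> (nat \<Rightarrow> bool) \<Rightarrow> real"
    and v :: "nat \<Rightarrow> nat" and a :: "nat \<Rightarrow> nat \<Rightarrow> real"
  assumes "m \<ge> 1"
    and "product_game m U v a"
  shows "equilibrium_candidates m U = (\<Union>p\<in>{p. p permutes players m}. EC m a p)
    \<and> disjoint_family_on (EC m a) {p. p permutes players m}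
    \<and> (\<forall>p. p permutes players m \<longrightarrow> card (EC m a p) = 2 ^ card (fixpts m p))
    \<and> card (equilibrium_candidates m U) = (\<Sum>l=0..m. (m choose l) * 2 ^ l * subfact (m - l))
    \<and> card (equilibrium_candidates m U) = Vnum m"
proof -
  note pg = assms(2)
  let ?I = "{p. p permutes players m}"
  have E: "equilibrium_candidates m U = (\<Union>p\<in>?I. EC m a p)"
  proof (rule equalityI; rule subsetI)
    fix g assume "g \<in> equilibrium_candidates m U"
    hence "g \<in> candC m a" using cand_eq[OF pg] by simp
    then obtain p where "p permutes players m" "g \<in> EC m a p" using C_sub[OF pg] by blast
    thus "g \<in> (\<Union>p\<in>?I. EC m a p)" by (intro UN_I) simp_all
  next
    fix g assume "g \<in> (\<Union>p\<in>?I. EC m a p)"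
    then obtain p where "p \<in> ?I" "g \<in> EC m a p" by (rule UN_E)
    hence "g \<in> candC m a" using EC_sub[OF pg, of p] by auto
    thus "g \<in> equilibrium_candidates m U" using cand_eq[OF pg] by simp
  qed
  have D0: "EC m a p \<inter> EC m a q = {}" if "p \<in> ?I" "q \<in> ?I" "p \<noteq> q" for p q
  proof (rule equals0I)
    fix g assume "g \<in> EC m a p \<inter> EC m a q"
    thus False using EC_disj[OF pg, of p q g] that by simp
  qed
  have D: "disjoint_family_on (EC m a) ?I"
    unfolding disjoint_family_on_def using D0 by simp
  have CE: "\<forall>p. p permutes players m \<longrightarrow> card (EC m a p) = 2 ^ card (fixpts m p)"
    using card_EC[OF pg] by simp
  have fI: "finite ?I" by (rule finite_permutations) (simp add: players_def)
  have fEC: "\<forall>p\<in>?I. finite (EC m a p)"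
  proof
    fix p assume "p \<in> ?I"
    hence "card (EC m a p) \<noteq> 0" using CE by simp
    thus "finite (EC m a p)" by (meson card.infinite)
  qed
  have "card (equilibrium_candidates m U) = (\<Sum>p\<in>?I. card (EC m a p))"
    unfolding E by (rule card_UN_disjoint[OF fI fEC]) (use D0 in simp)
  also have "\<dots> = (\<Sum>p\<in>?I. 2 ^ card (fixpts m p))" by (rule sum.cong) (simp_all add: CE)
  also have "\<dots> = (\<Sum>l=0..m. (m choose l) * 2 ^ l * subfact (m - l))" by (rule count_perm)
  finally have C: "card (equilibrium_candidates m U) = (\<Sum>l=0..m. (m choose l) * 2 ^ l * subfact (m - l))" .
  show ?thesis using E D CE C by (simp add: Vnum_def)
qed

end
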